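(* Let $A$ be a uniformly random $k\times n$ binary matrix, $\mathbf{s}$ a uniformly random $k$-bit binary vector, and $\mathbf{z}=f(\mathbf{s}A)+\mathbf{v}$ where the bits of $\mathbf{v}\in\{0,1\}^D$ are i.i.d. Bernoulli. Let $\mathbf{c}$ be a uniformly random $n$-bit vector chosen independently of everything else. For $i\in\{1,\dots,k\}$, let $A'$ be the matrix obtained from $A$ by replacing its $i$-th row $(A)_i$ with $(A)_i+\mathbf{c}$, and let $hyb_i$ denote the distribution of the bitstring $\langle A',\mathbf{z}\rangle$. If $s_i=1$, then $hyb_i$ is the uniform distribution on $\{0,1\}^{kn+D}$.
   Context: All arithmetic is over $GF(2)$; $+$ denotes XOR. The function $f:\{0,1\}^n\to\{0,1\}^D$: given positive integers $n,p$ with $D=n-p$ and a Boolean function $g:\{0,1\}^p\to\{0,1\}$ whose algebraic normal form contains only non-linear terms (every monomial has degree at least two), $f(\mathbf{x})=\mathbf{y}$ has bits $y_i=x_i+g(x_{i+1},\dots,x_{i+p})$ for $1\le i\le D$. Such $f$ maps the uniform distribution on $\{0,1\}^n$ to the uniform distribution on $\{0,1\}^D$. *)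

theory Defs
  imports "HOL-Probability.Probability"
begin

(* Bits are bool, XOR is (\<noteq>). Bit vectors are bool lists; a k x n matrix is a list of
   k rows, each a bool list of length n. All indices are 0-based. *)

(* Evaluation of an algebraic normal form given as a finite set S of monomials,
   each monomial being a set of variable indices: XOR over M \<in> S of AND_{j \<in> M} x_j *)
definition anf_eval :: "nat set set \<Rightarrow> bool list \<Rightarrow> bool" where
  "anf_eval S xs = odd (card {M \<in> S. \<forall>j\<in>M. xs ! j})"

definition nonlinear_anf :: "nat \<Rightarrow> (bool list \<Rightarrow> bool) \<Rightarrow> bool" where
  "nonlinear_anf p g \<longleftrightarrow> (\<exists>S. finite S \<and> (\<forall>M\<in>S. M \<subseteq> {..<p} \<and> card M \<ge> 2) \<and>
        (\<forall>xs. length xs = p \<longrightarrow> g xs = anf_eval S xs))"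

(* f : {0,1}^n \<rightarrow> {0,1}^D, y_i = x_i + g(x_{i+1},...,x_{i+p}) (0-based), D = n - p *)
definition fmap :: "(bool list \<Rightarrow> bool) \<Rightarrow> nat \<Rightarrow> nat \<Rightarrow> bool list \<Rightarrow> bool list" where
  "fmap g n p x = map (\<lambda>i. x ! i \<noteq> g (take p (drop (i+1) x))) [0..<n-p]"

definition vecmat :: "nat \<Rightarrow> bool list \<Rightarrow> bool list list \<Rightarrow> bool list" where
  "vecmat n s A = map (\<lambda>j. odd (card {l. l < length s \<and> s ! l \<and> A ! l ! j})) [0..<n]"

fun bern_list :: "real \<Rightarrow> nat \<Rightarrow> bool list pmf" where
  "bern_list eta 0 = return_pmf []"
| "bern_list eta (Suc m) = bind_pmf (bernoulli_pmf eta) (\<lambda>b. map_pmf (Cons b) (bern_list eta m))"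

definition bits :: "nat \<Rightarrow> bool list set" where
  "bits m = {xs. length xs = m}"

definition matrices :: "nat \<Rightarrow> nat \<Rightarrow> bool list list set" where
  "matrices k n = {A. length A = k \<and> (\<forall>r\<in>set A. length r = n)}"

definition joint_exp :: "real \<Rightarrow> nat \<Rightarrow> nat \<Rightarrow> nat \<Rightarrow>
    (bool list list \<times> bool list \<times> bool list \<times> bool list) pmf" where
  "joint_exp eta k n D =
     do { A \<leftarrow> pmf_of_set (matrices k n);
          s \<leftarrow> pmf_of_set (bits k);
          v \<leftarrow> bern_list eta D;
          c \<leftarrow> pmf_of_set (bits n);
          return_pmf (A, s, v, c) }"

definition hyb_out :: "(bool list \<Rightarrow> bool) \<Rightarrow> nat \<Rightarrow> nat \<Rightarrow> nat \<Rightarrow>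
    bool list list \<times> bool list \<times> bool list \<times> bool list \<Rightarrow> bool list" where
  "hyb_out g n p i = (\<lambda>(A, s, v, c).
      concat (A[i := map2 (\<noteq>) (A ! i) c]) @ map2 (\<noteq>) (fmap g n p (vecmat n s A)) v)"

definition hyb_given_si :: "real \<Rightarrow> (bool list \<Rightarrow> bool) \<Rightarrow> nat \<Rightarrow> nat \<Rightarrow> nat \<Rightarrow> nat \<Rightarrow> bool list pmf" where
  "hyb_given_si eta g k n p i =
     map_pmf (hyb_out g n p i)
       (cond_pmf (joint_exp eta k n (n - p)) {(A, s, v, c). s ! i})"

end

theory Submission imports Defs begin

lemma bits_alt: "bits m = {xs. set xs \<subseteq> (UNIV::bool set) \<and> length xs = m}"
  by (auto simp: bits_def)
lemma finite_bits[simp]: "finite (bits m)"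
  unfolding bits_alt by (rule finite_lists_length_eq) simp
lemma card_bits: "card (bits m) = 2^m"
  unfolding bits_alt by (subst card_lists_length_eq) simp_all
lemma bits_ne[simp]: "bits m \<noteq> {}"
  by (auto simp: bits_def intro!: exI[of _ "replicate m False"])
lemma matrices_alt: "matrices k n = {A. set A \<subseteq> bits n \<and> length A = k}"
  by (auto simp: matrices_def bits_def)
lemma finite_matrices[simp]: "finite (matrices k n)"
  unfolding matrices_alt by (rule finite_lists_length_eq) simp
lemma matrices_ne[simp]: "matrices k n \<noteq> {}"
  by (auto simp: matrices_def intro!: exI[of _ "replicate k (replicate n False)"])

lemma inj_card_bij:
  assumes "inj_on f A" "f ` A \<subseteq> B" "card A = card B" "finite B"
  shows "bij_betw f A B"
  using assms by (metis bij_betw_def card_image card_subset_eq)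

lemma pmf_of_set_times:
  assumes "finite A" "A \<noteq> {}" "finite B" "B \<noteq> {}"
  shows "pair_pmf (pmf_of_set A) (pmf_of_set B) = pmf_of_set (A \<times> B)"
proof (rule pmf_eqI)
  fix x :: "'a \<times> 'b" show "pmf (pair_pmf (pmf_of_set A) (pmf_of_set B)) x = pmf (pmf_of_set (A \<times> B)) x"
    using assms by (cases x) (auto simp: pmf_pair indicator_def card_cartesian_product)
qed

lemma cond_pmf_of_set:
  assumes "finite A" "A \<inter> X \<noteq> {}"
  shows "cond_pmf (pmf_of_set A) X = pmf_of_set (A \<inter> X)"
proof (rule pmf_eqI)
  fix x
  have ne: "A \<noteq> {}" using assms by auto
  show "pmf (cond_pmf (pmf_of_set A) X) x = pmf (pmf_of_set (A \<inter> X)) x"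
    using assms ne by (auto simp: pmf_cond measure_pmf_of_set indicator_def Int_commute)
qed

lemma cond_pair:
  assumes "set_pmf P \<inter> X \<noteq> {}"
  shows "cond_pmf (pair_pmf P Q) (X \<times> UNIV) = pair_pmf (cond_pmf P X) Q"
proof (rule pmf_eqI)
  fix x :: "'a \<times> 'b"
  obtain a b where x: "x = (a,b)" by (cases x)
  have ne: "set_pmf (pair_pmf P Q) \<inter> (X \<times> UNIV) \<noteq> {}"
    using assms set_pmf_not_empty[of Q] by auto
  have m: "measure (pair_pmf P Q) (X \<times> UNIV) = measure P X"
  proof -
    have "measure (pair_pmf P Q) (X \<times> UNIV) = measure (map_pmf fst (pair_pmf P Q)) X"
      by (simp add: vimage_fst)
    then show ?thesis by (simp add: map_fst_pair_pmf)
  qed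
  show "pmf (cond_pmf (pair_pmf P Q) (X \<times> UNIV)) x = pmf (pair_pmf (cond_pmf P X) Q) x"
    using pmf_cond[OF ne] pmf_cond[OF assms] m by (simp add: x pmf_pair)
qed

lemma set_bern_list: "set_pmf (bern_list eta m) \<subseteq> bits m"
  by (induction m) (auto simp: bits_def)


lemma card_matrices: "card (matrices k n) = 2^(k*n)"
  unfolding matrices_alt by (subst card_lists_length_eq) (simp_all add: card_bits power_mult[symmetric] mult.commute)

lemma append_uniform:
  "map_pmf (\<lambda>(x,y). x @ y) (pmf_of_set (bits a \<times> bits b)) = pmf_of_set (bits (a+b))"
proof (rule map_pmf_of_set_bij_betw)
  show "bij_betw (\<lambda>(x, y). x @ y) (bits a \<times> bits b) (bits (a + b))"
  proof (rule inj_card_bij)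
    show "inj_on (\<lambda>(x, y). x @ y) (bits a \<times> bits b)"
      by (auto simp: inj_on_def bits_def)
    show "(\<lambda>(x, y). x @ y) ` (bits a \<times> bits b) \<subseteq> bits (a + b)" by (auto simp: bits_def)
    show "card (bits a \<times> bits b) = card (bits (a + b))"
      by (simp add: card_cartesian_product card_bits power_add)
  qed simp
qed (auto simp: finite_cartesian_product)

lemma inj_concat: "inj_on concat (matrices k n)"
proof (induction k)
  case 0 then show ?case by (simp add: matrices_def inj_on_def)
next
  case (Suc k)
  show ?case
  proof (rule inj_onI)
    fix A B assume A: "A \<in> matrices (Suc k) n" and B: "B \<in> matrices (Suc k) n" and e: "concat A = concat B"
    obtain r R where Ar: "A = r # R" using A by (cases A) (auto simp: matrices_def)
    obtain t T where Bt: "B = t # T" using B by (cases B) (auto simp: matrices_def)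
    have "length r = n" "length t = n" "R \<in> matrices k n" "T \<in> matrices k n"
      using A B Ar Bt by (auto simp: matrices_def)
    with e Ar Bt have "r = t" "concat R = concat T" by (auto simp: append_eq_append_conv)
    with Suc.IH \<open>R \<in> matrices k n\<close> \<open>T \<in> matrices k n\<close> have "R = T" by (auto dest: inj_onD)
    with \<open>r = t\<close> Ar Bt show "A = B" by simp
  qed
qed

lemma length_concat_matrices: "A \<in> matrices k n \<Longrightarrow> length (concat A) = k * n"
  by (induction A arbitrary: k) (auto simp: matrices_def)

lemma concat_uniform: "map_pmf concat (pmf_of_set (matrices k n)) = pmf_of_set (bits (k*n))"
proof (rule map_pmf_of_set_bij_betw)
  show "bij_betw concat (matrices k n) (bits (k * n))"
    proof (rule inj_card_bij[OF inj_concat])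
    show "concat ` matrices k n \<subseteq> bits (k * n)"
      by (auto simp: length_concat_matrices bits_def)
  qed (simp_all add: card_matrices card_bits)
qed auto

definition xorl :: "bool list \<Rightarrow> bool list \<Rightarrow> bool list" where
  "xorl u v = map2 (\<noteq>) u v"

lemma xorl_xorl: "length u = length v \<Longrightarrow> xorl (xorl u v) v = u"
  by (rule nth_equalityI) (auto simp: xorl_def)

lemma xor_uniform:
  assumes "v \<in> bits m"
  shows "map_pmf (\<lambda>w. xorl w v) (pmf_of_set (bits m)) = pmf_of_set (bits m)"
proof (rule map_pmf_of_set_bij_betw)
  show "bij_betw (\<lambda>w. xorl w v) (bits m) (bits m)"
  proof (rule inj_card_bij)
    show "inj_on (\<lambda>w. xorl w v) (bits m)"
      by (rule inj_on_inverseI[where g="\<lambda>w. xorl w v"]) (use assms in \<open>auto simp: bits_def xorl_xorl\<close>)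
      show "(\<lambda>w. xorl w v) ` bits m \<subseteq> bits m" using assms by (auto simp: bits_def xorl_def)
  qed simp_all
qed auto

lemma length_fmap[simp]: "length (fmap g n p x) = n - p"
  by (simp add: fmap_def)

lemma fmap_inj:
  assumes "length u = n" "length u' = n" "fmap g n p u = fmap g n p u'"
    "drop (n-p) u = drop (n-p) u'"
  shows "u = u'"
proof -
  have main: "\<forall>j. n - d \<le> j \<and> j < n \<longrightarrow> u ! j = u' ! j" for d
  proof (induction d)
    case 0 then show ?case by auto
  next
    case (Suc d)
    show ?case
    proof (intro allI impI)
      fix j assume j: "n - Suc d \<le> j \<and> j < n"
      show "u ! j = u' ! j"
      proof (cases "n - p \<le> j")
        case True
        have "drop (n-p) u ! (j - (n-p)) = drop (n-p) u' ! (j - (n-p))" using assms(4) by simp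
        then show ?thesis using True j assms(1,2) by simp
      next
        case False
        have t: "take p (drop (j+1) u) = take p (drop (j+1) u')"
        proof (rule nth_equalityI)
          show "length (take p (drop (j + 1) u)) = length (take p (drop (j + 1) u'))"
            using assms(1,2) by simp
          fix q assume q: "q < length (take p (drop (j + 1) u))"
          then have "q < p" "j + 1 + q < n" using assms(1) by auto
          then have "u ! (j+1+q) = u' ! (j+1+q)" using Suc.IH j by auto
          then show "take p (drop (j + 1) u) ! q = take p (drop (j + 1) u') ! q"
            using q \<open>q < p\<close> assms(1,2) by (simp add: add.commute)
        qed
        have "fmap g n p u ! j = fmap g n p u' ! j" using assms(3) by simp
        then show ?thesis using False t by (simp add: fmap_def) metis
      qed
    qed
  qed
  show ?thesis
    by (rule nth_equalityI) (use assms(1,2) main[of n] in auto)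
qed

lemma fmap_uniform:
  assumes "p \<le> n"
  shows "map_pmf (fmap g n p) (pmf_of_set (bits n)) = pmf_of_set (bits (n - p))"
proof -
  let ?F = "\<lambda>u. (fmap g n p u, drop (n-p) u)"
  have bij: "bij_betw ?F (bits n) (bits (n-p) \<times> bits p)"
  proof (rule inj_card_bij)
    show "inj_on ?F (bits n)"
      by (auto simp: inj_on_def bits_def intro: fmap_inj)
    show "?F ` bits n \<subseteq> bits (n - p) \<times> bits p" using assms by (auto simp: bits_def)
    show "card (bits n) = card (bits (n - p) \<times> bits p)"
      using assms by (simp add: card_cartesian_product card_bits power_add[symmetric])
  qed (simp add: finite_cartesian_product)
  have "map_pmf (fmap g n p) (pmf_of_set (bits n)) = map_pmf fst (map_pmf ?F (pmf_of_set (bits n)))"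
    by (simp add: map_pmf_comp)
  also have "\<dots> = map_pmf fst (pmf_of_set (bits (n-p) \<times> bits p))"
    by (subst map_pmf_of_set_bij_betw[OF bij]) auto
  also have "\<dots> = pmf_of_set (bits (n - p))"
    by (simp add: pmf_of_set_times[symmetric] map_fst_pair_pmf)
  finally show ?thesis .
qed


lemma card_split:
  assumes "finite L" "i \<in> L"
  shows "card {l\<in>L. P l} = card {l\<in>L-{i}. P l} + (if P i then 1 else 0)"
proof -
  have "{l\<in>L. P l} = {l\<in>L-{i}. P l} \<union> (if P i then {i} else {})" using assms by auto
  then show ?thesis using assms by (auto simp: card_Un_disjoint)
qed

lemma parity_swap:
  assumes "finite L" "i \<in> L" "\<forall>l\<in>L-{i}. P l = Q l"
  shows "odd (card {l\<in>L. P l}) = (odd (card {l\<in>L. Q l}) \<noteq> (P i \<noteq> Q i))"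
proof -
  have "{l\<in>L-{i}. P l} = {l\<in>L-{i}. Q l}" using assms(3) by auto
  then show ?thesis using card_split[OF assms(1,2), of P] card_split[OF assms(1,2), of Q] by auto
qed

lemma vecmat_key:
  assumes A: "A \<in> matrices k n" and s: "s \<in> bits k" "s ! i" and i: "i < k" and c: "c \<in> bits n"
  shows "vecmat n s A = xorl (vecmat n s (A[i := xorl (A!i) c])) c"
proof (rule nth_equalityI)
  show "length (vecmat n s A) = length (xorl (vecmat n s (A[i := xorl (A ! i) c])) c)"
    using c by (simp add: vecmat_def xorl_def bits_def)
  fix j assume "j < length (vecmat n s A)"
  then have j: "j < n" by (simp add: vecmat_def)
  have lk: "length s = k" using s by (simp add: bits_def)
  have ai: "length (A!i) = n" using A i by (auto simp: matrices_def)
  have lA: "length A = k" using A by (simp add: matrices_def)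
  have lc: "length c = n" using c by (simp add: bits_def)
  let ?A' = "A[i := xorl (A!i) c]"
  have eq: "{l. l < length s \<and> s ! l \<and> P l} = {l\<in>{..<k}. s ! l \<and> P l}" for P
    using lk by auto
  have "odd (card {l\<in>{..<k}. s ! l \<and> A ! l ! j}) =
        (odd (card {l\<in>{..<k}. s ! l \<and> ?A' ! l ! j}) \<noteq> ((s ! i \<and> A ! i ! j) \<noteq> (s ! i \<and> ?A' ! i ! j)))"
    by (rule parity_swap) (use i in auto)
  then show "vecmat n s A ! j = xorl (vecmat n s ?A') c ! j"
    using j s(2) ai lA lc i by (simp add: vecmat_def xorl_def eq) argo
qed

lemma xorl_comm_cancel: "length x = length c \<Longrightarrow> xorl (xorl x c) x = c"
  by (rule nth_equalityI) (auto simp: xorl_def)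

definition psi :: "nat \<Rightarrow> nat \<Rightarrow> bool list list \<times> bool list \<times> bool list \<Rightarrow> bool list list \<times> bool list \<times> bool list" where
  "psi n i = (\<lambda>(A,s,c). (A[i := xorl (A!i) c], s, vecmat n s A))"

definition psi' :: "nat \<Rightarrow> nat \<Rightarrow> bool list list \<times> bool list \<times> bool list \<Rightarrow> bool list list \<times> bool list \<times> bool list" where
  "psi' n i = (\<lambda>(A,s,u). let c = xorl u (vecmat n s A) in (A[i := xorl (A!i) c], s, c))"

lemma length_vecmat[simp]: "length (vecmat n s A) = n" by (simp add: vecmat_def)

lemma psi_uniform:
  fixes n :: nat
  assumes i: "i < k"
  defines "T \<equiv> matrices k n \<times> {s\<in>bits k. s ! i} \<times> bits n"
  shows "map_pmf (psi n i) (pmf_of_set T) = pmf_of_set T"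
proof -
  have fin: "finite T" unfolding T_def by (auto intro!: finite_cartesian_product)
  have ne: "T \<noteq> {}"
  proof -
    have "(replicate k (replicate n False), (replicate k False)[i := True], replicate n False) \<in> T"
      using i by (auto simp: T_def matrices_def bits_def)
    then show ?thesis by auto
  qed
  have inv: "psi' n i (psi n i x) = x" if "x \<in> T" for x
  proof -
    obtain A s c where x: "x = (A,s,c)" by (cases x)
    have A: "A \<in> matrices k n" and s: "s \<in> bits k" "s ! i" and c: "c \<in> bits n"
      using that by (auto simp: T_def x)
    have ai: "length (A!i) = n" using A i by (auto simp: matrices_def)
    have lc: "length c = n" using c by (simp add: bits_def)
    let ?A' = "A[i := xorl (A!i) c]"
    have cc: "xorl (vecmat n s A) (vecmat n s ?A') = c"
      by (subst vecmat_key[OF A s i c]) (rule xorl_comm_cancel, simp add: lc)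
    have "?A'[i := xorl (?A' ! i) c] = A"
      using A i ai lc by (simp add: matrices_def xorl_xorl)
    then show ?thesis using cc by (simp add: x psi_def psi'_def Let_def)
  qed
  have bij: "bij_betw (psi n i) T T"
  proof (rule inj_card_bij)
    show "inj_on (psi n i) T" by (rule inj_on_inverseI[of _ "psi' n i"]) (rule inv)
    show "psi n i ` T \<subseteq> T"
    proof
      fix y assume "y \<in> psi n i ` T"
      then obtain A s c where y: "y = psi n i (A,s,c)" and t: "(A,s,c) \<in> T" by auto
      have A: "A \<in> matrices k n" and c: "c \<in> bits n" using t by (auto simp: T_def)
      have "A[i := xorl (A!i) c] \<in> matrices k n"
        using A c i using set_update_subset_insert[of A i "xorl (A!i) c"] by (auto simp: matrices_def bits_def xorl_def)
      then show "y \<in> T" using t by (auto simp: y psi_def T_def bits_def)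
    qed
  qed (use fin in auto)
  show ?thesis by (rule map_pmf_of_set_bij_betw[OF bij ne fin])
qed


lemma joint_alt:
  "joint_exp eta k n D = map_pmf (\<lambda>((A,s,c),v). (A,s,v,c))
     (pair_pmf (pair_pmf (pmf_of_set (matrices k n)) (pair_pmf (pmf_of_set (bits k)) (pmf_of_set (bits n)))) (bern_list eta D))"
  unfolding joint_exp_def pair_pmf_def map_pmf_def
  apply (simp add: bind_assoc_pmf bind_return_pmf)
  apply (rule bind_pmf_cong[OF refl])+
  apply (rule bind_commute_pmf)
  done

lemma final_mix:
  assumes "p \<le> n"
  shows "map_pmf (\<lambda>((A,s,u),v). concat A @ xorl (fmap g n p u) v)
     (pair_pmf (pair_pmf (pmf_of_set (matrices k n)) (pair_pmf PS (pmf_of_set (bits n)))) (bern_list eta (n-p)))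
   = pmf_of_set (bits (k*n + (n-p)))"
proof -
  let ?PC = "pmf_of_set (bits n)" and ?B = "bern_list eta (n-p)"
  define W where "W = bind_pmf ?PC (\<lambda>u. bind_pmf ?B (\<lambda>v. return_pmf (xorl (fmap g n p u) v)))"
  have W: "W = pmf_of_set (bits (n-p))"
  proof -
    have "W = bind_pmf ?B (\<lambda>v. bind_pmf ?PC (\<lambda>u. return_pmf (xorl (fmap g n p u) v)))"
      unfolding W_def by (rule bind_commute_pmf)
    also have "\<dots> = bind_pmf ?B (\<lambda>v. map_pmf (\<lambda>w. xorl w v) (map_pmf (fmap g n p) ?PC))"
      by (simp add: map_pmf_comp map_pmf_def bind_assoc_pmf bind_return_pmf)
    also have "\<dots> = bind_pmf ?B (\<lambda>v. pmf_of_set (bits (n-p)))"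
    proof (rule bind_pmf_cong[OF refl])
      fix v assume "v \<in> set_pmf ?B"
      then have "v \<in> bits (n-p)" using set_bern_list by blast
      then show "map_pmf (\<lambda>w. xorl w v) (map_pmf (fmap g n p) ?PC) = pmf_of_set (bits (n - p))"
        by (simp add: fmap_uniform[OF assms] xor_uniform)
    qed
    finally show ?thesis by simp
  qed
  have "pmf_of_set (bits (k*n + (n-p))) = map_pmf (\<lambda>(x,y). x @ y) (pair_pmf (map_pmf concat (pmf_of_set (matrices k n))) W)"
    by (simp add: W concat_uniform pmf_of_set_times append_uniform)
  also have "\<dots> = map_pmf (\<lambda>((A,s,u),v). concat A @ xorl (fmap g n p u) v)
     (pair_pmf (pair_pmf (pmf_of_set (matrices k n)) (pair_pmf PS ?PC)) ?B)"
    unfolding W_def pair_pmf_def map_pmf_def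
    by (simp add: bind_assoc_pmf bind_return_pmf)
  finally show ?thesis by simp
qed


theorem lemma1:
  fixes eta :: real and g :: "bool list \<Rightarrow> bool" and k n p i :: nat
  assumes "0 < p" and "p < n"
    and "nonlinear_anf p g"
    and "0 \<le> eta" and "eta \<le> 1"
    and "i < k"
  shows "hyb_given_si eta g k n p i = pmf_of_set (bits (k * n + (n - p)))"
proof -
  let ?U = "matrices k n \<times> bits k \<times> bits n"
  let ?X = "{(A::bool list list, s::bool list, c::bool list). s ! i}"
  let ?T = "matrices k n \<times> {s\<in>bits k. s ! i} \<times> bits n"
  let ?B = "bern_list eta (n-p)"
  let ?h = "\<lambda>((A::bool list list,s::bool list,c::bool list),v::bool list). (A,s,v,c)"
  have PU: "pmf_of_set ?U = pair_pmf (pmf_of_set (matrices k n)) (pair_pmf (pmf_of_set (bits k)) (pmf_of_set (bits n)))"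
    by (simp add: pmf_of_set_times finite_cartesian_product)
  have PT: "pmf_of_set ?T = pair_pmf (pmf_of_set (matrices k n)) (pair_pmf (pmf_of_set {s\<in>bits k. s ! i}) (pmf_of_set (bits n)))"
  proof -
    have "(replicate k False)[i := True] \<in> {s\<in>bits k. s ! i}" using assms(6) by (auto simp: bits_def)
    then have "{s\<in>bits k. s ! i} \<noteq> {}" by auto
    then show ?thesis by (simp add: pmf_of_set_times finite_cartesian_product)
  qed
  have wit: "(replicate k (replicate n False), (replicate k False)[i := True], replicate n False) \<in> ?U \<inter> ?X"
    using assms(6) by (auto simp: matrices_def bits_def)
  have J: "joint_exp eta k n (n-p) = map_pmf ?h (pair_pmf (pmf_of_set ?U) ?B)"
    by (simp add: joint_alt PU)
  have vim: "?h -` {(A, s, v, c). s ! i} = ?X \<times> UNIV" by auto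
  have ne1: "set_pmf (pair_pmf (pmf_of_set ?U) ?B) \<inter> ?h -` {(A, s, v, c). s ! i} \<noteq> {}"
    using wit set_pmf_not_empty[of ?B] unfolding vim by (auto simp: finite_cartesian_product)
  have ne2: "set_pmf (pmf_of_set ?U) \<inter> ?X \<noteq> {}"
    using wit by (auto simp: finite_cartesian_product)
  have "cond_pmf (joint_exp eta k n (n-p)) {(A, s, v, c). s ! i} = map_pmf ?h (pair_pmf (cond_pmf (pmf_of_set ?U) ?X) ?B)"
    unfolding J cond_map_pmf[OF ne1] vim cond_pair[OF ne2] ..
  also have "cond_pmf (pmf_of_set ?U) ?X = pmf_of_set ?T"
  proof -
    have "?U \<inter> ?X = ?T" by auto
    then show ?thesis using wit by (subst cond_pmf_of_set) (auto simp: finite_cartesian_product)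
  qed
  finally have CJ: "cond_pmf (joint_exp eta k n (n-p)) {(A, s, v, c). s ! i} = map_pmf ?h (pair_pmf (pmf_of_set ?T) ?B)" .
  let ?out2 = "\<lambda>((A,s,u),v). concat A @ xorl (fmap g n p u) v"
  have "hyb_given_si eta g k n p i = map_pmf (hyb_out g n p i \<circ> ?h) (pair_pmf (pmf_of_set ?T) ?B)"
    unfolding hyb_given_si_def CJ by (simp add: map_pmf_comp o_def)
  also have "hyb_out g n p i \<circ> ?h = ?out2 \<circ> apfst (psi n i)"
    by (auto simp: hyb_out_def psi_def xorl_def fun_eq_iff)
  also have "map_pmf (?out2 \<circ> apfst (psi n i)) (pair_pmf (pmf_of_set ?T) ?B)
      = map_pmf ?out2 (pair_pmf (map_pmf (psi n i) (pmf_of_set ?T)) ?B)"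
    by (simp add: pair_map_pmf1 map_pmf_comp o_def)
  also have "map_pmf (psi n i) (pmf_of_set ?T) = pmf_of_set ?T"
    by (rule psi_uniform[OF assms(6)])
  also have "map_pmf ?out2 (pair_pmf (pmf_of_set ?T) ?B) = pmf_of_set (bits (k * n + (n - p)))"
    unfolding PT by (rule final_mix) (use assms(2) in simp)
  finally show ?thesis .
qed

end
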